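(* Fix non-negative integers $r$ and $m\ge1$. Let $b_j=(1^j,2^j,\dots,m^j)^T\in\mathbb{R}^m$ for $j=0,\dots,r$, and let $\tilde b_0=b_0$ and $\tilde b_j=b_j-\Pi_{j-1}b_j$ for $j\ge1$, where $\Pi_{j-1}$ is the orthogonal projection onto $\mathrm{Span}(b_0,\dots,b_{j-1})$ (Gram–Schmidt orthogonalization without normalization). Then for each $j\in\{0,\dots,r\}$ there is a constant $c_r>0$ depending only on $r$ such that $$\|\tilde b_j\|_\infty\le c_r\,m^j.$$ *)

theory Defs
  imports Complex_Main
begin

text \<open>Vectors in R^m are represented as functions nat \<Rightarrow> real; coordinate i (0-based,
  i < m) corresponds to the paper's coordinate i+1. All vectors used here vanish for i \<ge> m.\<close>

definition bvec :: "nat \<Rightarrow> nat \<Rightarrow> nat \<Rightarrow> real" where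
  "bvec m j = (\<lambda>i. if i < m then real (i + 1) ^ j else 0)"

definition inner_m :: "nat \<Rightarrow> (nat \<Rightarrow> real) \<Rightarrow> (nat \<Rightarrow> real) \<Rightarrow> real" where
  "inner_m m x y = (\<Sum>i<m. x i * y i)"

definition in_span_b :: "nat \<Rightarrow> nat \<Rightarrow> (nat \<Rightarrow> real) \<Rightarrow> bool" where
  "in_span_b m j w \<longleftrightarrow> (\<exists>a :: nat \<Rightarrow> real. w = (\<lambda>i. \<Sum>k<j. a k * bvec m k i))"

definition proj_b :: "nat \<Rightarrow> nat \<Rightarrow> (nat \<Rightarrow> real) \<Rightarrow> (nat \<Rightarrow> real)" where
  "proj_b m j v = (THE w. in_span_b m j w \<and>
       (\<forall>k<j. inner_m m (\<lambda>i. v i - w i) (bvec m k) = 0))"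

definition btilde :: "nat \<Rightarrow> nat \<Rightarrow> nat \<Rightarrow> real" where
  "btilde m j = (if j = 0 then bvec m 0
                 else (\<lambda>i. bvec m j i - proj_b m j (bvec m j) i))"

definition linf :: "nat \<Rightarrow> (nat \<Rightarrow> real) \<Rightarrow> real" where
  "linf m x = Max ((\<lambda>i. \<bar>x i\<bar>) ` {..<m})"

end

theory Submission
  imports Defs "HOL-Computational_Algebra.Polynomial"
begin

definition ip :: "nat \<Rightarrow> real poly \<Rightarrow> real poly \<Rightarrow> real" where
  "ip m p q = (\<Sum>i<m. poly p (real i + 1) * poly q (real i + 1))"

definition al :: "nat \<Rightarrow> real poly \<Rightarrow> real" where
  "al m p = ip m ([:0,1:] * p) p / ip m p p"

fun PP :: "nat \<Rightarrow> nat \<Rightarrow> real poly \<times> real poly" where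
  "PP m 0 = (1, 0)"
| "PP m (Suc n) = (let p = fst (PP m n); q = snd (PP m n) in
     ([:- al m p, 1:] * p - smult (ip m p p / ip m q q) q, p))"

definition P where "P m n = fst (PP m n)"
definition Q where "Q m n = snd (PP m n)"
definition be where "be m n = ip m (P m n) (P m n) / ip m (Q m n) (Q m n)"

lemma P0: "P m 0 = 1" by (simp add: P_def)
lemma Q0: "Q m 0 = 0" by (simp add: Q_def)
lemma QS: "Q m (Suc n) = P m n" by (simp add: Q_def P_def Let_def)
lemma PS: "P m (Suc n) = [:- al m (P m n), 1:] * P m n - smult (be m n) (Q m n)"
  by (simp add: Q_def P_def be_def Let_def)

lemma XP: "[:0,1:] * P m n = P m (Suc n) + smult (al m (P m n)) (P m n) + smult (be m n) (Q m n)"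
  unfolding PS by (simp add: algebra_simps)

lemma ip_sym: "ip m p q = ip m q p"
  by (simp add: ip_def mult.commute)
lemma ip_add: "ip m (p + q) r = ip m p r + ip m q r"
  by (simp add: ip_def sum.distrib algebra_simps)
lemma ip_diff: "ip m (p - q) r = ip m p r - ip m q r"
  by (simp add: ip_def sum_subtractf algebra_simps)
lemma ip_smult: "ip m (smult c p) r = c * ip m p r"
  by (simp add: ip_def sum_distrib_left algebra_simps)
lemma ip_add2: "ip m r (p + q) = ip m r p + ip m r q"
  by (simp add: ip_def sum.distrib algebra_simps)
lemma ip_diff2: "ip m r (p - q) = ip m r p - ip m r q"
  by (simp add: ip_def sum_subtractf algebra_simps)
lemma ip_smult2: "ip m r (smult c p) = c * ip m r p"
  by (simp add: ip_def sum_distrib_left algebra_simps)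
lemma ip_zero[simp]: "ip m 0 p = 0" "ip m p 0 = 0"
  by (simp_all add: ip_def)
lemma ip_X: "ip m ([:0,1:] * p) q = ip m p ([:0,1:] * q)"
  by (simp add: ip_def algebra_simps)
lemma ip_nonneg: "ip m p p \<ge> 0"
  by (simp add: ip_def sum_nonneg)

lemma ip_vanish_pt: assumes "ip m p p = 0" "i < m" shows "poly p (real i + 1) = 0"
proof -
  have "\<forall>i\<in>{..<m}. poly p (real i + 1) * poly p (real i + 1) = 0"
    using assms(1) unfolding ip_def by (subst sum_nonneg_eq_0_iff[symmetric]) auto
  thus ?thesis using assms(2) by auto
qed

lemma ip_vanish: assumes "ip m p p = 0" shows "ip m q p = 0"
  unfolding ip_def using ip_vanish_pt[OF assms] by (intro sum.neutral) auto


lemma hQ: assumes "\<forall>k<n. ip m (P m n) (P m k) = 0" "k \<le> n"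
  shows "ip m (P m n) (Q m k) = 0"
  using assms by (cases k) (auto simp: Q0 QS)

lemma orth_step:
  assumes IH: "\<And>j k. j \<le> n \<Longrightarrow> k < j \<Longrightarrow> ip m (P m j) (P m k) = 0"
    and k: "k \<le> n"
  shows "ip m (P m (Suc n)) (P m k) = 0"
proof -
  have ipS: "ip m (P m (Suc n)) r = ip m ([:0,1:] * P m n) r - al m (P m n) * ip m (P m n) r
      - be m n * ip m (Q m n) r" for r
    unfolding PS by (simp add: ip_diff ip_smult ip_add algebra_simps del: mult_pCons_left)
  show ?thesis
  proof (cases "k = n")
    case True
    have "ip m (P m n) (Q m n) = 0" by (rule hQ) (use IH in auto)
    then have q: "ip m (Q m n) (P m n) = 0" by (simp add: ip_sym)
    show ?thesis
    proof (cases "ip m (P m n) (P m n) = 0")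
      case True
      then have "ip m ([:0,1:] * P m n) (P m n) = 0" by (rule ip_vanish)
      with True q \<open>k = n\<close> show ?thesis by (simp add: ipS)
    next
      case False
      with q \<open>k = n\<close> show ?thesis by (simp add: ipS al_def)
    qed
  next
    case False
    with k have kn: "k < n" by simp
    then obtain n' where n': "n = Suc n'" by (cases n) auto
    have pk: "ip m (P m n) (P m k) = 0" using IH kn by simp
    have qn: "Q m n = P m n'" using n' by (simp add: QS)
    have IHn: "\<forall>k<n. ip m (P m n) (P m k) = 0" using IH by simp
    show ?thesis
    proof (cases "k = n'")
      case True
      have "ip m ([:0,1:] * P m n) (P m n') = ip m (P m n) ([:0,1:] * P m n')"
        by (rule ip_X)
      also have "\<dots> = ip m (P m n) (P m n)"
        unfolding XP[of m n'] using IHn hQ[OF IHn, of n'] n'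
        by (simp add: ip_add2 ip_smult2)
      finally have e: "ip m ([:0,1:] * P m n) (P m n') = ip m (P m n) (P m n)" .
      show ?thesis
      proof (cases "ip m (P m n') (P m n') = 0")
        case True
        then have "ip m ([:0,1:] * P m n) (P m n') = 0" by (rule ip_vanish)
        with e True show ?thesis using pk \<open>k = n'\<close>
          by (simp add: ipS qn be_def)
      next
        case False
        with e show ?thesis using pk \<open>k = n'\<close>
          by (simp add: ipS qn be_def)
      qed
    next
      case False
      with kn n' have kn': "k < n'" by simp
      have "ip m ([:0,1:] * P m n) (P m k) = ip m (P m n) ([:0,1:] * P m k)"
        by (rule ip_X)
      also have "\<dots> = 0"
        unfolding XP[of m k] using IHn hQ[OF IHn, of k] kn' n'
        by (simp add: ip_add2 ip_smult2)
      finally have "ip m ([:0,1:] * P m n) (P m k) = 0" .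
      moreover have "ip m (Q m n) (P m k) = 0" using IH kn' n' by (simp add: QS)
      ultimately show ?thesis using pk by (simp add: ipS)
    qed
  qed
qed

lemma orth: "k < n \<Longrightarrow> ip m (P m n) (P m k) = 0"
proof (induction n arbitrary: k)
  case 0 then show ?case by simp
next
  case (Suc n)
  show ?case
  proof (rule orth_step)
    fix j k assume "j \<le> n" "k < j"
    then show "ip m (P m j) (P m k) = 0"
    proof (induction j arbitrary: k rule: less_induct)
      case (less j)
      show ?case
      proof (cases j)
        case 0 with less show ?thesis by simp
      next
        case (Suc j')
        have "ip m (P m (Suc j')) (P m k) = 0"
          by (rule orth_step) (use less Suc in auto)
        with Suc show ?thesis by simp
      qed
    qed
  qed (use Suc in auto)
qed


lemma monic: "degree (P m n) \<le> n \<and> coeff (P m n) n = 1"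
proof (induction n rule: less_induct)
  case (less N)
  show ?case
  proof (cases N)
    case 0 then show ?thesis by (simp add: P0)
  next
    case (Suc n)
    have IH: "degree (P m n) \<le> n" "coeff (P m n) n = 1" using less Suc by auto
    have dq: "degree (Q m n) \<le> n \<and> coeff (Q m n) n = 0"
    proof (cases n)
      case 0 then show ?thesis by (simp add: Q0)
    next
      case (Suc n')
      have "degree (P m n') \<le> n'" using less \<open>N = Suc n\<close> Suc by auto
      then show ?thesis using Suc by (simp add: QS coeff_eq_0)
    qed
    have c1: "coeff (P m n) (Suc n) = 0" by (rule coeff_eq_0) (use IH in simp)
    have "degree ([:- al m (P m n), 1:] * P m n) \<le> Suc n"
      using degree_mult_le[of "[:- al m (P m n), 1:]" "P m n"] IH by simp
    moreover have "degree (smult (be m n) (Q m n)) \<le> Suc n" using dq by simp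
    ultimately have "degree (P m (Suc n)) \<le> Suc n"
      unfolding PS by (meson degree_diff_le)
    moreover have "coeff (P m (Suc n)) (Suc n) = 1"
      unfolding PS using IH dq c1 coeff_eq_0[of "Q m n" "Suc n"]
      by (simp add: mult_pCons_left)
    ultimately show ?thesis using Suc by simp
  qed
qed

lemma orth_deg: "degree q < j \<Longrightarrow> ip m (P m j) q = 0"
proof (induction "degree q" arbitrary: q rule: less_induct)
  case less
  define d where "d = degree q"
  define r where "r = q - smult (coeff q d) (P m d)"
  have md: "degree (P m d) \<le> d" "coeff (P m d) d = 1" using monic by auto
  have rq: "q = r + smult (coeff q d) (P m d)" by (simp add: r_def)
  have "ip m (P m j) (P m d) = 0" using orth[of d j m] less.prems d_def by (simp add: ip_sym)
  hence e: "ip m (P m j) q = ip m (P m j) r"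
    by (subst rq) (simp add: ip_add2 ip_smult2)
  show ?case
  proof (cases "d = 0")
    case True
    have "degree r \<le> 0" unfolding r_def using md True d_def
      by (intro degree_diff_le) auto
    moreover have "coeff r 0 = 0" unfolding r_def using md True by simp
    ultimately have "lead_coeff r = 0" by simp
    hence "r = 0" by simp
    with e show ?thesis by simp
  next
    case False
    have dr: "degree r \<le> d" unfolding r_def using md d_def
      by (intro degree_diff_le) auto
    have cr: "coeff r d = 0" unfolding r_def using md by simp
    have "degree r < d"
    proof (rule ccontr)
      assume "\<not> degree r < d"
      with dr have "degree r = d" by simp
      with cr have "r = 0" by (metis leading_coeff_0_iff)
      with \<open>degree r = d\<close> False show False by simp
    qed
    then have "ip m (P m j) r = 0" using less d_def by simp
    with e show ?thesis by simp
  qed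
qed


lemma poly_sum_lt: fixes q :: "real poly" assumes "degree q < j" shows "poly q x = (\<Sum>k<j. coeff q k * x ^ k)"
proof -
  have "(\<Sum>k<j. coeff q k * x ^ k) = (\<Sum>k\<le>degree q. coeff q k * x ^ k)"
    by (rule sum.mono_neutral_right) (use assms in \<open>auto simp: coeff_eq_0 not_le\<close>)
  thus ?thesis by (simp only: poly_altdef)
qed

lemma span_vanish: "in_span_b m j w \<Longrightarrow> \<not> i < m \<Longrightarrow> w i = 0"
  unfolding in_span_b_def bvec_def by auto

lemma span_unique:
  assumes s1: "in_span_b m j w1" and s2: "in_span_b m j w2"
    and o1: "\<forall>k<j. inner_m m (\<lambda>i. v i - w1 i) (bvec m k) = 0"
    and o2: "\<forall>k<j. inner_m m (\<lambda>i. v i - w2 i) (bvec m k) = 0"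
  shows "w1 = w2"
proof -
  obtain a1 where a1: "w1 = (\<lambda>i. \<Sum>k<j. a1 k * bvec m k i)" using s1 unfolding in_span_b_def by auto
  obtain a2 where a2: "w2 = (\<lambda>i. \<Sum>k<j. a2 k * bvec m k i)" using s2 unfolding in_span_b_def by auto
  define u where "u = (\<lambda>i. w1 i - w2 i)"
  have u: "u = (\<lambda>i. \<Sum>k<j. (a1 k - a2 k) * bvec m k i)"
    unfolding u_def a1 a2 by (simp add: sum_subtractf algebra_simps)
  have ob: "(\<Sum>i<m. u i * bvec m k i) = 0" if "k < j" for k
  proof -
    have "(\<Sum>i<m. u i * bvec m k i) = inner_m m (\<lambda>i. v i - w2 i) (bvec m k) - inner_m m (\<lambda>i. v i - w1 i) (bvec m k)"
      unfolding inner_m_def u_def by (simp add: sum_subtractf algebra_simps)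
    thus ?thesis using o1 o2 that by simp
  qed
  have "(\<Sum>i<m. u i * u i) = (\<Sum>i<m. \<Sum>k<j. (a1 k - a2 k) * (u i * bvec m k i))"
    by (subst (2) u) (simp add: sum_distrib_left algebra_simps)
  also have "\<dots> = (\<Sum>k<j. (a1 k - a2 k) * (\<Sum>i<m. u i * bvec m k i))"
    by (subst sum.swap) (simp add: sum_distrib_left)
  also have "\<dots> = 0" using ob by simp
  finally have z: "(\<Sum>i<m. u i * u i) = 0" .
  have "\<forall>i\<in>{..<m}. u i * u i = 0"
    using z by (subst sum_nonneg_eq_0_iff[symmetric]) auto
  hence "u i = 0" if "i < m" for i using that by auto
  show ?thesis
  proof
    fix i show "w1 i = w2 i"
    proof (cases "i < m")
      case True with \<open>\<And>i. i < m \<Longrightarrow> u i = 0\<close> show ?thesis by (simp add: u_def)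
    next
      case False with span_vanish[OF s1] span_vanish[OF s2] show ?thesis by simp
    qed
  qed
qed

lemma btilde_eq: "btilde m j = (\<lambda>i. if i < m then poly (P m j) (real i + 1) else 0)"
proof (cases "j = 0")
  case True then show ?thesis by (auto simp: btilde_def bvec_def P0)
next
  case False
  define q where "q = monom 1 j - P m j"
  define W where "W = (\<lambda>i. if i < m then poly q (real i + 1) else 0)"
  have mj: "degree (P m j) \<le> j" "coeff (P m j) j = 1" using monic by auto
  have dq: "degree q < j"
  proof -
    have dr: "degree q \<le> j" unfolding q_def using mj
      by (intro degree_diff_le) (auto simp: degree_monom_eq)
    have cr: "coeff q j = 0" unfolding q_def using mj by simp
    show ?thesis
    proof (rule ccontr)
      assume "\<not> degree q < j"
      with dr have "degree q = j" by simp
      with cr have "q = 0" by (metis leading_coeff_0_iff)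
      with \<open>degree q = j\<close> False show False by simp
    qed
  qed
  have sp: "in_span_b m j W"
    unfolding in_span_b_def
  proof (intro exI[of _ "coeff q"] ext)
    fix i show "W i = (\<Sum>k<j. coeff q k * bvec m k i)"
      using poly_sum_lt[OF dq, of "real i + 1"] by (simp add: W_def bvec_def add.commute)
  qed
  have diff: "bvec m j i - W i = (if i < m then poly (P m j) (real i + 1) else 0)" for i
    by (simp add: W_def bvec_def q_def poly_monom add.commute)
  have orW: "\<forall>k<j. inner_m m (\<lambda>i. bvec m j i - W i) (bvec m k) = 0"
  proof (intro allI impI)
    fix k assume "k < j"
    have "inner_m m (\<lambda>i. bvec m j i - W i) (bvec m k) = ip m (P m j) (monom 1 k)"
      unfolding inner_m_def ip_def diff by (intro sum.cong) (auto simp: bvec_def poly_monom add.commute)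
    also have "\<dots> = 0" by (rule orth_deg) (use \<open>k < j\<close> in \<open>simp add: degree_monom_eq\<close>)
    finally show "inner_m m (\<lambda>i. bvec m j i - W i) (bvec m k) = 0" .
  qed
  have "proj_b m j (bvec m j) = W"
    unfolding proj_b_def
  proof (rule the_equality)
    show "in_span_b m j W \<and> (\<forall>k<j. inner_m m (\<lambda>i. bvec m j i - W i) (bvec m k) = 0)"
      using sp orW by simp
  next
    fix w assume "in_span_b m j w \<and> (\<forall>k<j. inner_m m (\<lambda>i. bvec m j i - w i) (bvec m k) = 0)"
    then show "w = W" using span_unique[OF _ sp _ orW] by blast
  qed
  then show ?thesis using False diff by (simp add: btilde_def)
qed


lemma ipX_bounds: "0 \<le> ip m ([:0,1:] * p) p \<and> ip m ([:0,1:] * p) p \<le> real m * ip m p p"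
proof -
  have "ip m ([:0,1:] * p) p = (\<Sum>i<m. (real i + 1) * (poly p (real i + 1))\<^sup>2)"
    unfolding ip_def by (simp add: power2_eq_square algebra_simps)
  moreover have "(\<Sum>i<m. (real i + 1) * (poly p (real i + 1))\<^sup>2) \<le> (\<Sum>i<m. real m * (poly p (real i + 1))\<^sup>2)"
    by (intro sum_mono mult_right_mono) auto
  moreover have "(\<Sum>i<m. real m * (poly p (real i + 1))\<^sup>2) = real m * ip m p p"
    unfolding ip_def by (simp add: sum_distrib_left power2_eq_square)
  moreover have "0 \<le> (\<Sum>i<m. (real i + 1) * (poly p (real i + 1))\<^sup>2)"
    by (intro sum_nonneg) auto
  ultimately show ?thesis by simp
qed

lemma al_bounds: "0 \<le> al m p \<and> al m p \<le> real m"
proof (cases "ip m p p = 0")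
  case True then show ?thesis by (simp add: al_def)
next
  case False
  hence pos: "ip m p p > 0" using ip_nonneg[of m p] by simp
  show ?thesis using ipX_bounds[of m p] pos
    by (auto simp: al_def divide_le_eq)
qed

lemma ipXX: "ip m ([:0,1:] * p) ([:0,1:] * p) \<le> (real m)\<^sup>2 * ip m p p"
proof -
  have "ip m ([:0,1:] * p) ([:0,1:] * p) = (\<Sum>i<m. (real i + 1)\<^sup>2 * (poly p (real i + 1))\<^sup>2)"
    unfolding ip_def by (simp add: power2_eq_square algebra_simps)
  also have "\<dots> \<le> (\<Sum>i<m. (real m)\<^sup>2 * (poly p (real i + 1))\<^sup>2)"
    by (intro sum_mono mult_right_mono power_mono) auto
  also have "\<dots> = (real m)\<^sup>2 * ip m p p"
    unfolding ip_def by (simp add: sum_distrib_left power2_eq_square)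
  finally show ?thesis .
qed

lemma norm_step: "ip m (P m (Suc n)) (P m (Suc n)) \<le> (real m)\<^sup>2 * ip m (P m n) (P m n)"
proof -
  let ?p = "P m (Suc n)" and ?y = "[:0,1:] * P m n"
  have IHn: "\<forall>k<Suc n. ip m ?p (P m k) = 0" using orth by blast
  have e: "ip m ?p ?y = ip m ?p ?p"
    unfolding XP[of m n] using IHn hQ[OF IHn, of n]
    by (simp add: ip_add2 ip_smult2)
  have sy: "ip m ?y ?p = ip m ?p ?y" by (rule ip_sym)
  have "ip m (?p - ?y) (?p - ?y) = ip m ?p ?p - ip m ?p ?y - ip m ?y ?p + ip m ?y ?y"
    by (simp only: ip_diff ip_diff2)
  also have "\<dots> = ip m ?p ?p - 2 * ip m ?p ?y + ip m ?y ?y"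
    by (simp only: sy)
  finally have "ip m (?p - ?y) (?p - ?y) = ip m ?p ?p - 2 * ip m ?p ?y + ip m ?y ?y" .
  then have "0 \<le> ip m ?p ?p - 2 * ip m ?p ?y + ip m ?y ?y" using ip_nonneg[of m "?p - ?y"] by linarith
  hence "ip m ?p ?p \<le> ip m ?y ?y" using e by simp
  also have "\<dots> \<le> (real m)\<^sup>2 * ip m (P m n) (P m n)" by (rule ipXX)
  finally show ?thesis .
qed

lemma be_bounds: "0 \<le> be m n \<and> be m n \<le> (real m)\<^sup>2"
proof (cases n)
  case 0 then show ?thesis by (simp add: be_def Q0)
next
  case (Suc n')
  have q: "Q m n = P m n'" using Suc by (simp add: QS)
  show ?thesis
  proof (cases "ip m (P m n') (P m n') = 0")
    case True then show ?thesis by (simp add: be_def q)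
  next
    case False
    hence pos: "ip m (P m n') (P m n') > 0" using ip_nonneg[of m "P m n'"] by simp
    have ns: "ip m (P m n) (P m n) \<le> (real m)\<^sup>2 * ip m (P m n') (P m n')"
      using norm_step[of m n'] Suc by simp
    show ?thesis using ns pos ip_nonneg[of m "P m n"]
      by (simp add: be_def q divide_le_eq)
  qed
qed

lemma sup_bound:
  fixes x :: real
  assumes x: "1 \<le> x" "x \<le> real m"
  shows "\<bar>poly (P m n) x\<bar> \<le> 2^n * real m ^ n \<and> 2 * real m * \<bar>poly (Q m n) x\<bar> \<le> 2^n * real m ^ n"
proof (induction n)
  case 0 then show ?case by (simp add: P0 Q0)
next
  case (Suc n)
  define M where "M = real m"
  define A where "A = 2^n * M ^ n"
  define a where "a = al m (P m n)"
  define b where "b = be m n"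
  have IH: "\<bar>poly (P m n) x\<bar> \<le> A" "2 * M * \<bar>poly (Q m n) x\<bar> \<le> A"
    using Suc by (auto simp: A_def M_def)
  have M1: "1 \<le> M" using x by (simp add: M_def)
  have ab: "0 \<le> a" "a \<le> M" using al_bounds[of m "P m n"] by (auto simp: a_def M_def)
  have bb: "0 \<le> b" "b \<le> M^2" using be_bounds[of m n] by (auto simp: b_def M_def)
  have xa: "\<bar>x - a\<bar> \<le> M" using ab x by (auto simp: M_def)
  have ev: "poly (P m (Suc n)) x = (x - a) * poly (P m n) x - b * poly (Q m n) x"
    by (simp add: PS a_def b_def algebra_simps)
  have t1: "\<bar>x - a\<bar> * \<bar>poly (P m n) x\<bar> \<le> M * A"
    by (rule mult_mono) (use xa IH M1 in auto)
  have t2: "b * \<bar>poly (Q m n) x\<bar> \<le> M^2 * \<bar>poly (Q m n) x\<bar>"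
    by (rule mult_right_mono) (use bb in auto)
  have t3: "M^2 * \<bar>poly (Q m n) x\<bar> \<le> M * A / 2"
    using IH(2) M1 by (simp add: power2_eq_square field_simps)
  have A0: "0 \<le> A" using M1 by (simp add: A_def)
  have "\<bar>poly (P m (Suc n)) x\<bar> \<le> \<bar>x - a\<bar> * \<bar>poly (P m n) x\<bar> + b * \<bar>poly (Q m n) x\<bar>"
    unfolding ev using bb abs_triangle_ineq4[of "(x - a) * poly (P m n) x" "b * poly (Q m n) x"]
    by (simp add: abs_mult)
  also have "\<dots> \<le> 2 * M * A"
  proof -
    have "0 \<le> M * A" using A0 M1 by simp
    then show ?thesis using t1 t2 t3 by linarith
  qed
  finally have p1: "\<bar>poly (P m (Suc n)) x\<bar> \<le> 2 ^ Suc n * M ^ Suc n" by (simp add: A_def algebra_simps)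
  have p2: "2 * M * \<bar>poly (Q m (Suc n)) x\<bar> \<le> 2 ^ Suc n * M ^ Suc n"
    using IH(1) M1 by (simp add: QS A_def)
  show ?case using p1 p2 by (simp add: M_def)
qed

theorem lemma10:
  fixes r :: nat
  shows "\<exists>c > 0. \<forall>m :: nat. m \<ge> 1 \<longrightarrow>
           (\<forall>j \<le> r. linf m (btilde m j) \<le> c * real m ^ j)"
proof (intro exI[of _ "2^r"] conjI allI impI)
  fix m j :: nat assume m: "m \<ge> 1" and j: "j \<le> r"
  have "linf m (btilde m j) \<le> 2^j * real m ^ j"
    unfolding linf_def
  proof (subst Max_le_iff)
    show "finite ((\<lambda>i. \<bar>btilde m j i\<bar>) ` {..<m})" by simp
    have "0 \<in> {..<m}" using m by simp
    then show "(\<lambda>i. \<bar>btilde m j i\<bar>) ` {..<m} \<noteq> {}" by blast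
    show "\<forall>a\<in>(\<lambda>i. \<bar>btilde m j i\<bar>) ` {..<m}. a \<le> 2 ^ j * real m ^ j"
    proof
      fix a assume "a \<in> (\<lambda>i. \<bar>btilde m j i\<bar>) ` {..<m}"
      then obtain i where i: "i < m" "a = \<bar>btilde m j i\<bar>" by auto
      have "\<bar>poly (P m j) (real i + 1)\<bar> \<le> 2 ^ j * real m ^ j"
        using sup_bound[of "real i + 1" m j] i by auto
      with i show "a \<le> 2 ^ j * real m ^ j" by (simp add: btilde_eq)
    qed
  qed
  also have "\<dots> \<le> 2^r * real m ^ j"
    by (rule mult_right_mono) (use j in auto)
  finally show "linf m (btilde m j) \<le> 2^r * real m ^ j" .
qed simp

end
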